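(* The elements $H_k$, $k\in\mathbb Z$, generate the ring $\Lambda^{\pm}_m=\mathbb Z[x_1^{\pm1},\dots,x_m^{\pm1}]^{S_m}$.
   Context: For a sequence of integers $\lambda=(\lambda_1,\dots,\lambda_m)$, $E_\lambda$ is defined by $E_\lambda(x)\prod_{i<j}(x_i-x_j)=\sum_{\sigma\in S_m}\mathrm{sgn}(\sigma)\sigma(x_1^{\lambda_1+m-1}x_2^{\lambda_2+m-2}\cdots x_m^{\lambda_m})$, and $H_k=E_{(k,0,\dots,0)}$ for $k\in\mathbb Z$. *)

theory Defs
  imports "HOL-Library.Poly_Mapping" "HOL-Combinatorics.Permutations"
begin

text \<open>Laurent polynomials over Z in variables x_0, x_1, ... (x_i is variable index i;
  the paper's x_1..x_m correspond to indices 0..m-1).  A monomial is an integer exponent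
  vector of type nat =>0 int; a Laurent polynomial is a finitely supported map from
  monomials to integer coefficients, with the convolution product of Poly_Mapping.\<close>

type_synonym lpoly = "(nat \<Rightarrow>\<^sub>0 int) \<Rightarrow>\<^sub>0 int"

definition laurent_ring :: "nat \<Rightarrow> lpoly set" where
  "laurent_ring m = {p :: lpoly. \<forall>\<alpha>\<in>Poly_Mapping.keys p. Poly_Mapping.keys \<alpha> \<subseteq> {..<m}}"

definition lvar :: "nat \<Rightarrow> lpoly" where
  "lvar i = Poly_Mapping.single (Poly_Mapping.single i 1) 1"

definition perm_mon :: "(nat \<Rightarrow> nat) \<Rightarrow> (nat \<Rightarrow>\<^sub>0 int) \<Rightarrow> (nat \<Rightarrow>\<^sub>0 int)" where
  "perm_mon \<sigma> \<alpha> = (\<Sum>i\<in>Poly_Mapping.keys \<alpha>. Poly_Mapping.single (\<sigma> i) (Poly_Mapping.lookup \<alpha> i))"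

definition sym_laurent :: "nat \<Rightarrow> lpoly set" where
  "sym_laurent m = {p \<in> laurent_ring m. \<forall>\<sigma>. \<sigma> permutes {..<m} \<longrightarrow>
      (\<forall>\<alpha>. Poly_Mapping.lookup p (perm_mon \<sigma> \<alpha>) = Poly_Mapping.lookup p \<alpha>)}"

definition vandermonde :: "nat \<Rightarrow> lpoly" where
  "vandermonde m = (\<Prod>i<m. \<Prod>j\<in>{i<..<m}. lvar i - lvar j)"

definition alternant :: "nat \<Rightarrow> (nat \<Rightarrow> int) \<Rightarrow> lpoly" where
  "alternant m e = (\<Sum>\<sigma>\<in>{\<sigma>. \<sigma> permutes {..<m}}.
      of_int (sign \<sigma>) * Poly_Mapping.single (\<Sum>i<m. Poly_Mapping.single (\<sigma> i) (e i)) 1)"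

definition E_lam :: "nat \<Rightarrow> (nat \<Rightarrow> int) \<Rightarrow> lpoly" where
  "E_lam m lam = (THE p. p \<in> laurent_ring m \<and>
      p * vandermonde m = alternant m (\<lambda>i. lam i + int (m - 1 - i)))"

definition H :: "nat \<Rightarrow> int \<Rightarrow> lpoly" where
  "H m k = E_lam m (\<lambda>i. if i = 0 then k else 0)"

inductive_set subring_gen :: "'a::comm_ring_1 set \<Rightarrow> 'a set" for S where
  gen: "x \<in> S \<Longrightarrow> x \<in> subring_gen S"
| one: "1 \<in> subring_gen S"
| add: "x \<in> subring_gen S \<Longrightarrow> y \<in> subring_gen S \<Longrightarrow> x + y \<in> subring_gen S"
| neg: "x \<in> subring_gen S \<Longrightarrow> - x \<in> subring_gen S"
| mult: "x \<in> subring_gen S \<Longrightarrow> y \<in> subring_gen S \<Longrightarrow> x * y \<in> subring_gen S"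

end

theory Submission
  imports Defs Jordan_Normal_Form.Determinant
begin


definition mon :: "(nat \<Rightarrow>\<^sub>0 int) \<Rightarrow> lpoly" where "mon a = Poly_Mapping.single a 1"

lemma mon_mult: "mon a * mon b = mon (a + b)"
  by (simp add: mon_def mult_single)

lemma lookup_mon: "Poly_Mapping.lookup (mon a) b = (if a = b then 1 else 0)"
  by (simp add: mon_def lookup_single when_def)

lemma keys_mon[simp]: "Poly_Mapping.keys (mon a) = {a}"
  by (simp add: mon_def)

lemma mon_0: "mon 0 = 1"
  by (simp add: mon_def)

definition symp :: "nat \<Rightarrow> lpoly \<Rightarrow> bool" where
  "symp m p \<longleftrightarrow> (\<forall>\<sigma>. \<sigma> permutes {..<m} \<longrightarrow>
      (\<forall>\<alpha>. Poly_Mapping.lookup p (perm_mon \<sigma> \<alpha>) = Poly_Mapping.lookup p \<alpha>))"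

lemma sym_laurent_iff: "p \<in> sym_laurent m \<longleftrightarrow> p \<in> laurent_ring m \<and> symp m p"
  by (simp add: sym_laurent_def symp_def)

lemma lookup_perm_mon:
  assumes "bij \<sigma>"
  shows "Poly_Mapping.lookup (perm_mon \<sigma> \<alpha>) j = Poly_Mapping.lookup \<alpha> (Hilbert_Choice.inv \<sigma> j)"
proof -
  have "Poly_Mapping.lookup (perm_mon \<sigma> \<alpha>) j = (\<Sum>i\<in>Poly_Mapping.keys \<alpha>. (Poly_Mapping.lookup \<alpha> i when \<sigma> i = j))"
    by (simp add: perm_mon_def lookup_sum lookup_single)
  also have "\<dots> = (\<Sum>i\<in>Poly_Mapping.keys \<alpha>. (if i = Hilbert_Choice.inv \<sigma> j then Poly_Mapping.lookup \<alpha> i else 0))"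
    apply (rule sum.cong, simp)
    using assms by (auto simp: when_def bij_inv_eq_iff)
  also have "\<dots> = Poly_Mapping.lookup \<alpha> (Hilbert_Choice.inv \<sigma> j)"
    by (simp add: sum.delta in_keys_iff)
  finally show ?thesis .
qed

lemma perm_mon_add:
  assumes "bij \<sigma>" shows "perm_mon \<sigma> (a + b) = perm_mon \<sigma> a + perm_mon \<sigma> b"
  by (rule poly_mapping_eqI) (simp add: lookup_perm_mon[OF assms] lookup_add)

lemma perm_mon_zero:
  assumes "bij \<sigma>" shows "perm_mon \<sigma> 0 = 0"
  by (rule poly_mapping_eqI) (simp add: lookup_perm_mon[OF assms])

lemma perm_mon_inv:
  assumes "bij \<sigma>" shows "perm_mon (Hilbert_Choice.inv \<sigma>) (perm_mon \<sigma> a) = a"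
proof -
  have b: "bij (Hilbert_Choice.inv \<sigma>)" using assms by (simp add: bij_imp_bij_inv)
  show ?thesis
    by (rule poly_mapping_eqI) (simp add: lookup_perm_mon[OF assms] lookup_perm_mon[OF b] inv_inv_eq[OF assms] inv_f_f[OF bij_is_inj[OF assms]])
qed

lemma perm_mon_inv2:
  assumes "bij \<sigma>" shows "perm_mon \<sigma> (perm_mon (Hilbert_Choice.inv \<sigma>) a) = a"
proof -
  have b: "bij (Hilbert_Choice.inv \<sigma>)" using assms by (simp add: bij_imp_bij_inv)
  show ?thesis
    by (rule poly_mapping_eqI) (simp add: lookup_perm_mon[OF assms] lookup_perm_mon[OF b] inv_inv_eq[OF assms] surj_f_inv_f[OF bij_is_surj[OF assms]])
qed

lemma bij_perm_mon: assumes "bij \<sigma>" shows "bij (perm_mon \<sigma>)"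
  by (metis assms bij_betw_byWitness perm_mon_inv perm_mon_inv2 UNIV_I subsetI)

lemma inj_perm_mon: assumes "bij \<sigma>" shows "inj (perm_mon \<sigma>)"
  using bij_perm_mon[OF assms] bij_is_inj by blast

lemma lookup_mult_perm:
  assumes "bij \<sigma>"
    and P: "\<And>\<alpha>. Poly_Mapping.lookup p (perm_mon \<sigma> \<alpha>) = Poly_Mapping.lookup p \<alpha>"
    and Q: "\<And>\<alpha>. Poly_Mapping.lookup q (perm_mon \<sigma> \<alpha>) = Poly_Mapping.lookup q \<alpha>"
  shows "Poly_Mapping.lookup (p * q) (perm_mon \<sigma> \<gamma>) = Poly_Mapping.lookup (p * q) \<gamma>"
proof -
  define \<pi> where "\<pi> = perm_mon \<sigma>"
  have b: "bij \<pi>" unfolding \<pi>_def by (rule bij_perm_mon[OF assms(1)])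
  have inj: "\<And>x y. \<pi> x = \<pi> y \<longleftrightarrow> x = y" using inj_perm_mon[OF assms(1)] unfolding \<pi>_def by (auto dest: injD)
  have add: "\<And>x y. \<pi> x + \<pi> y = \<pi> (x + y)" unfolding \<pi>_def by (simp add: perm_mon_add[OF assms(1)])
  have P': "\<And>a. Poly_Mapping.lookup p (\<pi> a) = Poly_Mapping.lookup p a" using P unfolding \<pi>_def .
  have Q': "\<And>a. Poly_Mapping.lookup q (\<pi> a) = Poly_Mapping.lookup q a" using Q unfolding \<pi>_def .
  have inner: "(\<Sum>r. Poly_Mapping.lookup q r when \<pi> \<gamma> = \<pi> l + r) = (\<Sum>r. Poly_Mapping.lookup q r when \<gamma> = l + r)" for l
  proof -
    have "(\<Sum>r. Poly_Mapping.lookup q r when \<pi> \<gamma> = \<pi> l + r) = (\<Sum>r. Poly_Mapping.lookup q (\<pi> r) when \<pi> \<gamma> = \<pi> l + \<pi> r)"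
      by (rule Sum_any.reindex_cong[OF b]) (simp add: o_def)
    also have "\<dots> = (\<Sum>r. Poly_Mapping.lookup q r when \<gamma> = l + r)"
      by (simp only: Q' add inj)
    finally show ?thesis .
  qed
  have "Poly_Mapping.lookup (p * q) (\<pi> \<gamma>) = (\<Sum>l. Poly_Mapping.lookup p l * (\<Sum>r. Poly_Mapping.lookup q r when \<pi> \<gamma> = l + r))"
    by (simp only: lookup_mult)
  also have "\<dots> = (\<Sum>l. Poly_Mapping.lookup p (\<pi> l) * (\<Sum>r. Poly_Mapping.lookup q r when \<pi> \<gamma> = \<pi> l + r))"
    by (rule Sum_any.reindex_cong[OF b]) (simp add: o_def)
  also have "\<dots> = (\<Sum>l. Poly_Mapping.lookup p l * (\<Sum>r. Poly_Mapping.lookup q r when \<gamma> = l + r))"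
    by (simp only: P' inner)
  also have "\<dots> = Poly_Mapping.lookup (p * q) \<gamma>" by (simp only: lookup_mult)
  finally show ?thesis unfolding \<pi>_def .
qed

lemma symp_mult: "symp m p \<Longrightarrow> symp m q \<Longrightarrow> symp m (p * q)"
  unfolding symp_def
proof (intro allI impI)
  fix \<sigma> \<gamma> assume "\<forall>\<sigma>. \<sigma> permutes {..<m} \<longrightarrow> (\<forall>\<alpha>. Poly_Mapping.lookup p (perm_mon \<sigma> \<alpha>) = Poly_Mapping.lookup p \<alpha>)"
    "\<forall>\<sigma>. \<sigma> permutes {..<m} \<longrightarrow> (\<forall>\<alpha>. Poly_Mapping.lookup q (perm_mon \<sigma> \<alpha>) = Poly_Mapping.lookup q \<alpha>)"
    "\<sigma> permutes {..<m}"
  then show "Poly_Mapping.lookup (p * q) (perm_mon \<sigma> \<gamma>) = Poly_Mapping.lookup (p * q) \<gamma>"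
    by (intro lookup_mult_perm) (auto simp: permutes_bij)
qed

lemma symp_add: "symp m p \<Longrightarrow> symp m q \<Longrightarrow> symp m (p + q)"
  unfolding symp_def by (simp add: lookup_add)

lemma symp_neg: "symp m p \<Longrightarrow> symp m (- p)"
  unfolding symp_def by simp

lemma symp_diff: "symp m p \<Longrightarrow> symp m q \<Longrightarrow> symp m (p - q)"
  unfolding symp_def by (simp add: lookup_minus)

lemma perm_mon_eq_0: "bij \<sigma> \<Longrightarrow> perm_mon \<sigma> \<alpha> = 0 \<longleftrightarrow> \<alpha> = 0"
  using inj_perm_mon perm_mon_zero by (metis injD)

lemma symp_of_int: "symp m (of_int c)"
  unfolding symp_def
  by (auto simp: lookup_of_int when_def perm_mon_eq_0 permutes_bij)

lemma symp_one: "symp m 1"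
  using symp_of_int[of m 1] by simp

lemma symp_power: "symp m p \<Longrightarrow> symp m (p ^ n)"
  by (induction n) (simp_all add: symp_one symp_mult)

lemma laurent_mult: "p \<in> laurent_ring m \<Longrightarrow> q \<in> laurent_ring m \<Longrightarrow> p * q \<in> laurent_ring m"
  unfolding laurent_ring_def mem_Collect_eq
proof (intro ballI)
  fix \<alpha> assume p: "\<forall>\<alpha>\<in>Poly_Mapping.keys p. Poly_Mapping.keys \<alpha> \<subseteq> {..<m}"
    and q: "\<forall>\<alpha>\<in>Poly_Mapping.keys q. Poly_Mapping.keys \<alpha> \<subseteq> {..<m}"
    and a: "\<alpha> \<in> Poly_Mapping.keys (p * q)"
  have "\<alpha> \<in> {a + b |a b. a \<in> Poly_Mapping.keys p \<and> b \<in> Poly_Mapping.keys q}"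
    using keys_mult a by (rule subsetD)
  then obtain a b where ab: "\<alpha> = a + b" "a \<in> Poly_Mapping.keys p" "b \<in> Poly_Mapping.keys q"
    by auto
  have "Poly_Mapping.keys (a + b) \<subseteq> Poly_Mapping.keys a \<union> Poly_Mapping.keys b" by (rule keys_add)
  then show "Poly_Mapping.keys \<alpha> \<subseteq> {..<m}" using p q ab by blast
qed

lemma laurent_add: "p \<in> laurent_ring m \<Longrightarrow> q \<in> laurent_ring m \<Longrightarrow> p + q \<in> laurent_ring m"
  unfolding laurent_ring_def mem_Collect_eq
proof
  fix \<alpha> assume "\<forall>\<alpha>\<in>Poly_Mapping.keys p. Poly_Mapping.keys \<alpha> \<subseteq> {..<m}" "\<forall>\<alpha>\<in>Poly_Mapping.keys q. Poly_Mapping.keys \<alpha> \<subseteq> {..<m}"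
    "\<alpha> \<in> Poly_Mapping.keys (p + q)"
  moreover have "\<alpha> \<in> Poly_Mapping.keys p \<union> Poly_Mapping.keys q" using keys_add \<open>\<alpha> \<in> _\<close> by (rule subsetD)
  ultimately show "Poly_Mapping.keys \<alpha> \<subseteq> {..<m}" by blast
qed

lemma laurent_neg: "p \<in> laurent_ring m \<Longrightarrow> - p \<in> laurent_ring m"
  unfolding laurent_ring_def by (simp add: in_keys_iff)

lemma laurent_one: "1 \<in> laurent_ring m"
  unfolding laurent_ring_def by simp

lemma sym_subring: 
  assumes "\<And>k. H m k \<in> sym_laurent m"
  shows "subring_gen (range (H m)) \<subseteq> sym_laurent m"
proof
  fix x assume "x \<in> subring_gen (range (H m))"
  have a: "H m k \<in> laurent_ring m" "symp m (H m k)" for k using assms[of k] by (auto simp: sym_laurent_iff)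
  from \<open>x \<in> _\<close> show "x \<in> sym_laurent m"
    unfolding sym_laurent_iff
  proof induction
    case (gen x) then show ?case using a by auto
  next
    case one then show ?case by (simp add: laurent_one symp_one)
  next
    case (add x y) then show ?case by (simp add: laurent_add symp_add)
  next
    case (neg x) then show ?case by (simp add: laurent_neg symp_neg)
  next
    case (mult x y) then show ?case by (simp add: laurent_mult symp_mult)
  qed
qed




definition ind :: "nat set \<Rightarrow> (nat \<Rightarrow>\<^sub>0 int)" where
  "ind S = (\<Sum>i\<in>S. Poly_Mapping.single i 1)"

lemma lookup_ind: "finite S \<Longrightarrow> Poly_Mapping.lookup (ind S) i = (if i \<in> S then 1 else 0)"
  by (simp add: ind_def lookup_sum lookup_single when_def)

lemma ind_empty[simp]: "ind {} = 0" by (simp add: ind_def)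

lemma prod_mon: "(\<Prod>i\<in>A. mon (f i)) = mon (\<Sum>i\<in>A. f i)"
  by (induction A rule: infinite_finite_induct) (simp_all add: mon_0 mon_mult)

definition xp :: "nat \<Rightarrow> int \<Rightarrow> lpoly" where
  "xp j a = mon (Poly_Mapping.single j a)"

lemma xp_add: "xp j (a + b) = xp j a * xp j b"
  by (simp add: xp_def mon_mult single_add)

lemma lvar_xp: "lvar j = xp j 1"
  by (simp add: lvar_def xp_def mon_def)

lemma lvar_power: "lvar j ^ n = xp j (int n)"
proof (induction n)
  case 0 then show ?case by (simp add: xp_def mon_0)
next
  case (Suc n)
  have "lvar j ^ Suc n = lvar j * lvar j ^ n" by simp
  also have "\<dots> = xp j 1 * xp j (int n)" by (subst Suc, subst lvar_xp, rule refl)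
  also have "\<dots> = xp j (int (Suc n))" by (simp add: xp_add[symmetric] add.commute)
  finally show ?case .
qed

lemma prod_lvar: "finite S \<Longrightarrow> (\<Prod>i\<in>S. lvar i) = mon (ind S)"
proof -
  have "lvar i = mon (Poly_Mapping.single i 1)" for i by (simp add: lvar_def mon_def)
  then show ?thesis by (simp add: ind_def prod_mon)
qed

definition amat :: "nat \<Rightarrow> (nat \<Rightarrow> int) \<Rightarrow> lpoly mat" where
  "amat m f = mat m m (\<lambda>(i,j). xp j (f i))"

lemma alternant_det: "alternant m f = det (amat m f)"
proof -
  have c: "amat m f \<in> carrier_mat m m" by (simp add: amat_def)
  have "det (amat m f) = (\<Sum>p\<in>{p. p permutes {0..<m}}. of_int (sign p) * (\<Prod>i = 0..<m. amat m f $$ (i, p i)))"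
    by (rule det_def'[OF c])
  also have "\<dots> = (\<Sum>p\<in>{p. p permutes {..<m}}. of_int (sign p) * mon (\<Sum>i<m. Poly_Mapping.single (p i) (f i)))"
  proof (rule sum.cong)
    show "{p. p permutes {0..<m}} = {p. p permutes {..<m}}" by (simp add: atLeast0LessThan)
  next
    fix p assume "p \<in> {p. p permutes {..<m}}"
    then have pm: "p i < m" if "i < m" for i using that permutes_in_image by fastforce
    have "(\<Prod>i = 0..<m. amat m f $$ (i, p i)) = (\<Prod>i<m. mon (Poly_Mapping.single (p i) (f i)))"
      by (rule prod.cong) (auto simp: amat_def pm xp_def atLeast0LessThan)
    then show "of_int (sign p) * (\<Prod>i = 0..<m. amat m f $$ (i, p i)) = of_int (sign p) * mon (\<Sum>i<m. Poly_Mapping.single (p i) (f i))"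
      by (simp add: prod_mon)
  qed
  finally show ?thesis by (simp add: alternant_def mon_def)
qed

lemma det_row0_lin:
  assumes m: "m > 0" and B: "B \<in> carrier_mat m m" and A: "\<And>l. l \<in> L \<Longrightarrow> A l \<in> carrier_mat m m"
    and fin: "finite L"
    and rows: "\<And>l i j. l \<in> L \<Longrightarrow> 0 < i \<Longrightarrow> i < m \<Longrightarrow> j < m \<Longrightarrow> A l $$ (i,j) = B $$ (i,j)"
    and row0: "\<And>j. j < m \<Longrightarrow> B $$ (0,j) = (\<Sum>l\<in>L. c l * A l $$ (0,j))"
  shows "det B = (\<Sum>l\<in>L. c l * det (A l))"
proof -
  have split: "{0..<m} = insert 0 {1..<m}" using m by auto
  have "det B = (\<Sum>p\<in>{p. p permutes {0..<m}}. signof p * (B $$ (0, p 0) * (\<Prod>i\<in>{1..<m}. B $$ (i, p i))))"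
    by (simp add: det_def'[OF B] split)
  also have "\<dots> = (\<Sum>p\<in>{p. p permutes {0..<m}}. \<Sum>l\<in>L. c l * (signof p * (A l $$ (0, p 0) * (\<Prod>i\<in>{1..<m}. A l $$ (i, p i)))))"
  proof (rule sum.cong[OF refl])
    fix p assume "p \<in> {p. p permutes {0..<m}}"
    then have pm: "p i < m" if "i < m" for i using that permutes_in_image by fastforce
    have p0: "p 0 < m" using pm m by simp
    have pr: "(\<Prod>i\<in>{1..<m}. A l $$ (i, p i)) = (\<Prod>i\<in>{1..<m}. B $$ (i, p i))" if "l \<in> L" for l
      by (rule prod.cong) (auto simp: rows that pm)
    have "signof p * (B $$ (0, p 0) * (\<Prod>i\<in>{1..<m}. B $$ (i, p i))) = (\<Sum>l\<in>L. c l * (signof p * (A l $$ (0, p 0) * (\<Prod>i\<in>{1..<m}. B $$ (i, p i)))))"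
      by (simp add: row0[OF p0] sum_distrib_left sum_distrib_right algebra_simps)
    also have "\<dots> = (\<Sum>l\<in>L. c l * (signof p * (A l $$ (0, p 0) * (\<Prod>i\<in>{1..<m}. A l $$ (i, p i)))))"
      by (rule sum.cong[OF refl]) (simp only: pr)
    finally show "signof p * (B $$ (0, p 0) * (\<Prod>i\<in>{1..<m}. B $$ (i, p i))) = (\<Sum>l\<in>L. c l * (signof p * (A l $$ (0, p 0) * (\<Prod>i\<in>{1..<m}. A l $$ (i, p i)))))" .
  qed
  also have "\<dots> = (\<Sum>l\<in>L. c l * (\<Sum>p\<in>{p. p permutes {0..<m}}. signof p * (A l $$ (0, p 0) * (\<Prod>i\<in>{1..<m}. A l $$ (i, p i)))))"
    by (subst sum.swap) (simp add: sum_distrib_left)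
  also have "\<dots> = (\<Sum>l\<in>L. c l * det (A l))"
    by (rule sum.cong[OF refl]) (simp add: det_def'[OF A] split)
  finally show ?thesis .
qed

lemma det_row0_zero:
  assumes m: "m > 0" and B: "B \<in> carrier_mat m m" and z: "\<And>j. j < m \<Longrightarrow> B $$ (0,j) = 0"
  shows "det B = 0"
proof -
  have split: "{0..<m} = insert 0 {1..<m}" using m by auto
  have "det B = (\<Sum>p\<in>{p. p permutes {0..<m}}. signof p * (B $$ (0, p 0) * (\<Prod>i\<in>{1..<m}. B $$ (i, p i))))"
    by (simp add: det_def'[OF B] split)
  also have "\<dots> = 0"
  proof (rule sum.neutral, rule ballI)
    fix p assume "p \<in> {p. p permutes {0..<m}}"
    then have "p 0 < m" using m permutes_in_image by fastforce
    then show "signof p * (B $$ (0, p 0) * (\<Prod>i\<in>{1..<m}. B $$ (i, p i))) = 0" by (simp add: z)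
  qed
  finally show ?thesis .
qed

definition esymA :: "nat set \<Rightarrow> nat \<Rightarrow> lpoly" where
  "esymA A c = (\<Sum>S\<in>{S. S \<subseteq> A \<and> card S = c}. mon (ind S))"

lemma vieta:
  assumes fin: "finite A"
  shows "(\<Prod>k\<in>A. y - lvar k) = (\<Sum>c\<le>card A. (-1)^c * esymA A c * y ^ (card A - c))"
proof -
  have "(\<Prod>k\<in>A. y - lvar k) = (\<Prod>k\<in>A. (- lvar k) + y)" by simp
  also have "\<dots> = (\<Sum>X\<in>Pow A. (\<Prod>x\<in>X. - lvar x) * (\<Prod>x\<in>A - X. y))"
    by (rule prod_add[OF fin])
  also have "\<dots> = (\<Sum>X\<in>Pow A. (-1)^card X * mon (ind X) * y ^ (card A - card X))"
  proof (rule sum.cong[OF refl])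
    fix X assume X: "X \<in> Pow A"
    then have fX: "finite X" using fin finite_subset by blast
    have "(\<Prod>x\<in>X. - lvar x) = (-1)^card X * (\<Prod>x\<in>X. lvar x)"
      by (simp add: prod_uminus)  
    moreover have "card (A - X) = card A - card X" using X fX by (simp add: card_Diff_subset)
    ultimately show "(\<Prod>x\<in>X. - lvar x) * (\<Prod>x\<in>A - X. y) = (-1)^card X * mon (ind X) * y ^ (card A - card X)"
      by (simp add: prod_lvar[OF fX])
  qed
  also have "\<dots> = (\<Sum>c\<le>card A. \<Sum>X\<in>{X. X \<in> Pow A \<and> card X = c}. (-1)^card X * mon (ind X) * y ^ (card A - card X))"
    by (rule sum.group[symmetric]) (auto simp: fin card_mono)
  also have "\<dots> = (\<Sum>c\<le>card A. (-1)^c * esymA A c * y ^ (card A - c))"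
    by (rule sum.cong[OF refl]) (auto simp: esymA_def sum_distrib_left sum_distrib_right intro!: sum.cong)
  finally show ?thesis .
qed




lemma esymA_0: "finite A \<Longrightarrow> esymA A 0 = 1"
proof -
  assume "finite A"
  then have "{S. S \<subseteq> A \<and> card S = 0} = {{}}" using finite_subset by fastforce
  then show ?thesis by (simp add: esymA_def mon_0)
qed

lemma prod_list_upt: "prod_list (map f [0..<m]) = (\<Prod>i<m. f i)"
  by (induction m) (simp_all add: mult.commute)

lemma vandermonde_alt: "vandermonde m = alternant m (\<lambda>i. int (m - 1 - i))"
proof -
  define Ai where "Ai i = {i<..<m}" for i
  define N where "N = mat m m (\<lambda>(i,j). \<Prod>k\<in>Ai i. lvar j - lvar k)"
  define C where "C = mat m m (\<lambda>(i,k). if i \<le> k then (-1)^(k-i) * esymA (Ai i) (k-i) else 0)"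
  define M where "M = amat m (\<lambda>i. int (m - 1 - i))"
  have cA: "card (Ai i) = m - 1 - i" for i by (simp add: Ai_def)
  have fA: "finite (Ai i)" for i by (simp add: Ai_def)
  have NC: "N \<in> carrier_mat m m" and CC: "C \<in> carrier_mat m m" and MC: "M \<in> carrier_mat m m"
    by (simp_all add: N_def C_def M_def amat_def)
  have NCM: "N = C * M"
  proof (rule eq_matI)
    fix i j assume i: "i < dim_row (C * M)" and j: "j < dim_col (C * M)"
    then have i: "i < m" and j: "j < m" using CC MC by auto
    have "(C * M) $$ (i,j) = (\<Sum>k\<in>{0..<m}. C $$ (i,k) * M $$ (k,j))"
      using i j CC MC by (simp add: scalar_prod_def row_def col_def)
    also have "\<dots> = (\<Sum>k\<in>{0..<m}. if i \<le> k then (-1)^(k-i) * esymA (Ai i) (k-i) * xp j (int (m - 1 - k)) else 0)"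
      by (rule sum.cong[OF refl]) (simp add: C_def M_def amat_def i j)
    also have "\<dots> = (\<Sum>k\<in>{i..<m}. (-1)^(k-i) * esymA (Ai i) (k-i) * xp j (int (m - 1 - k)))"
      by (rule sum.mono_neutral_cong_right) (use i in auto)
    also have "\<dots> = (\<Sum>c\<in>{0..<m-i}. (-1)^c * esymA (Ai i) c * xp j (int (m - 1 - (c + i))))"
      by (rule sum.reindex_bij_witness[of _ "\<lambda>c. c + i" "\<lambda>k. k - i"]) (use i in auto)
    also have "\<dots> = (\<Sum>c\<le>card (Ai i). (-1)^c * esymA (Ai i) c * lvar j ^ (card (Ai i) - c))"
    proof (rule sum.cong)
      show "{0..<m-i} = {..card (Ai i)}" using i by (auto simp: cA)
    next
      fix c assume "c \<in> {..card (Ai i)}"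
      then have "int (m - 1 - (c + i)) = int (card (Ai i) - c)" using i by (simp add: cA)
      then show "(-1)^c * esymA (Ai i) c * xp j (int (m - 1 - (c + i))) = (-1)^c * esymA (Ai i) c * lvar j ^ (card (Ai i) - c)"
        by (simp add: lvar_power)
    qed
    also have "\<dots> = (\<Prod>k\<in>Ai i. lvar j - lvar k)" by (rule vieta[OF fA, symmetric])
    also have "\<dots> = N $$ (i,j)" using i j by (simp add: N_def)
    finally show "N $$ (i,j) = (C * M) $$ (i,j)" by simp
  qed (use CC MC NC in auto)
  have detC: "det C = 1"
  proof -
    have "upper_triangular C" unfolding upper_triangular_def using CC by (auto simp: C_def)
    then have "det C = prod_list (diag_mat C)" using CC by (rule det_upper_triangular)
    also have "\<dots> = (\<Prod>i<m. C $$ (i,i))" using CC by (simp add: diag_mat_def prod_list_upt)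
    also have "\<dots> = 1" by (rule prod.neutral) (simp add: C_def esymA_0[OF fA])
    finally show ?thesis .
  qed
  have detN: "det N = vandermonde m"
  proof -
    have "det N = prod_list (diag_mat N)"
    proof (rule det_lower_triangular[OF _ NC])
      fix i j assume "i < j" "j < m"
      then have "j \<in> Ai i" by (simp add: Ai_def)
      then show "N $$ (i,j) = 0" using \<open>i < j\<close> \<open>j < m\<close> by (auto simp: N_def prod_zero_iff fA)
    qed
    also have "\<dots> = (\<Prod>i<m. N $$ (i,i))" using NC by (simp add: diag_mat_def prod_list_upt)
    also have "\<dots> = vandermonde m" by (simp add: vandermonde_def N_def Ai_def)
    finally show ?thesis .
  qed
  have "vandermonde m = det C * det M" using detN NCM det_mult[OF CC MC] by simp
  then show ?thesis by (simp add: detC M_def alternant_det)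
qed




definition ex :: "nat \<Rightarrow> int \<Rightarrow> nat \<Rightarrow> int" where
  "ex m a = (\<lambda>i. if i = 0 then a else int (m - 1 - i))"

definition Fal :: "nat \<Rightarrow> int \<Rightarrow> lpoly" where
  "Fal m a = alternant m (ex m a)"

definition esym :: "nat \<Rightarrow> nat \<Rightarrow> lpoly" where
  "esym m c = esymA {..<m} c"

definition DD :: "nat \<Rightarrow> lpoly" where "DD m = mon (ind {..<m})"
definition DI :: "nat \<Rightarrow> lpoly" where "DI m = mon (- ind {..<m})"

lemma DD_DI: "DD m * DI m = 1"
  by (simp add: DD_def DI_def mon_mult mon_0)

lemma Fal_top: "Fal m (int (m - 1)) = vandermonde m"
proof -
  have "ex m (int (m - 1)) = (\<lambda>i. int (m - 1 - i))" by (auto simp: ex_def)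
  then show ?thesis by (simp add: Fal_def vandermonde_alt)
qed

lemma Fal_zero:
  assumes "0 \<le> a" "a \<le> int m - 2"
  shows "Fal m a = 0"
proof -
  define i0 where "i0 = m - 1 - nat a"
  have i0: "0 < i0" "i0 < m" using assms by (auto simp: i0_def)
  have e: "ex m a i0 = ex m a 0" using assms i0 by (simp add: ex_def i0_def)
  have "det (amat m (ex m a)) = 0"
  proof (rule det_identical_rows[of _ m 0 i0])
    show "amat m (ex m a) \<in> carrier_mat m m" by (simp add: amat_def)
    show "row (amat m (ex m a)) 0 = row (amat m (ex m a)) i0"
      using i0 e by (auto simp: amat_def row_def)
  qed (use i0 in auto)
  then show ?thesis by (simp add: Fal_def alternant_det)
qed

lemma esym_0: "esym m 0 = 1" by (simp add: esym_def esymA_0)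

lemma esym_top: "esym m m = DD m"
proof -
  have "{S. S \<subseteq> {..<m} \<and> card S = m} = {{..<m}}"
    using card_subset_eq[of "{..<m}"] by auto
  then show ?thesis by (simp add: esym_def esymA_def DD_def)
qed

lemma rec_Fal:
  assumes m: "m > 0"
  shows "(\<Sum>c\<le>m. (-1)^c * esym m c * Fal m (a - int c)) = 0"
proof -
  define B where "B = mat m m (\<lambda>(i,j). if i = 0 then (\<Sum>c\<le>m. (-1)^c * esym m c * xp j (a - int c)) else xp j (int (m - 1 - i)))"
  have BC: "B \<in> carrier_mat m m" by (simp add: B_def)
  have "det B = (\<Sum>c\<le>m. (-1)^c * esym m c * det (amat m (ex m (a - int c))))"
  proof (rule det_row0_lin[OF m BC])
    fix l i j assume "0 < i" "i < m" "j < m"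
    then show "amat m (ex m (a - int l)) $$ (i, j) = B $$ (i, j)" by (simp add: amat_def B_def ex_def)
  next
    fix j assume "j < m"
    then show "B $$ (0, j) = (\<Sum>l\<le>m. (-1)^l * esym m l * amat m (ex m (a - int l)) $$ (0, j))"
      using m by (simp add: amat_def B_def ex_def)
  qed (auto simp: amat_def)
  moreover have "det B = 0"
  proof (rule det_row0_zero[OF m BC])
    fix j assume j: "j < m"
    have "B $$ (0, j) = (\<Sum>c\<le>m. (-1)^c * esym m c * xp j (a - int c))" using j m by (simp add: B_def)
    also have "\<dots> = (\<Sum>c\<le>m. xp j (a - int m) * ((-1)^c * esym m c * lvar j ^ (m - c)))"
    proof (rule sum.cong[OF refl])
      fix c assume "c \<in> {..m}"
      then have "a - int c = (a - int m) + int (m - c)" by auto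
      then have "xp j (a - int c) = xp j ((a - int m) + int (m - c))" by (rule arg_cong)
      also have "\<dots> = xp j (a - int m) * lvar j ^ (m - c)" by (simp only: xp_add lvar_power)
      finally have "xp j (a - int c) = xp j (a - int m) * lvar j ^ (m - c)" .
      then show "(-1)^c * esym m c * xp j (a - int c) = xp j (a - int m) * ((-1)^c * esym m c * lvar j ^ (m - c))"
        by (simp only: mult.assoc mult.left_commute)
    qed
    also have "\<dots> = xp j (a - int m) * (\<Prod>k<m. lvar j - lvar k)"
      using vieta[of "{..<m}" "lvar j"] by (simp only: sum_distrib_left[symmetric] esym_def card_lessThan finite_lessThan)
    also have "\<dots> = 0" using j by (auto simp: prod_zero_iff)
    finally show "B $$ (0, j) = 0" .
  qed
  ultimately show ?thesis by (simp add: Fal_def alternant_det)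
qed

lemma lvar_diff_nz: assumes "i \<noteq> j" shows "lvar i - lvar j \<noteq> 0"
proof
  assume "lvar i - lvar j = 0"
  then have "Poly_Mapping.lookup (lvar i - lvar j) (Poly_Mapping.single i 1) = 0" by simp
  moreover have "Poly_Mapping.single i (1::int) \<noteq> Poly_Mapping.single j 1"
    using assms by (metis lookup_single_eq lookup_single_not_eq zero_neq_one)
  ultimately show False by (simp add: lvar_def lookup_minus lookup_single)
qed

lemma vandermonde_nz: "vandermonde m \<noteq> 0"
proof -
  have inner: "(\<Prod>j\<in>{i<..<m}. lvar i - lvar j) \<noteq> 0" for i
  proof -
    have "\<forall>j\<in>{i<..<m}. lvar i - lvar j \<noteq> 0" using lvar_diff_nz by force
    then show ?thesis by (subst prod_zero_iff) auto
  qed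
  have "(\<Prod>i<m. \<Prod>j\<in>{i<..<m}. lvar i - lvar j) \<noteq> 0"
    by (subst prod_zero_iff) (use inner in auto)
  then show ?thesis by (simp add: vandermonde_def)
qed

lemma E_char:
  assumes "p \<in> laurent_ring m" "p * vandermonde m = alternant m (\<lambda>i. lam i + int (m - 1 - i))"
  shows "E_lam m lam = p"
  unfolding E_lam_def
proof (rule the_equality)
  show "p \<in> laurent_ring m \<and> p * vandermonde m = alternant m (\<lambda>i. lam i + int (m - 1 - i))" using assms by simp
next
  fix q assume "q \<in> laurent_ring m \<and> q * vandermonde m = alternant m (\<lambda>i. lam i + int (m - 1 - i))"
  then have "q * vandermonde m = p * vandermonde m" using assms by simp
  then show "q = p" using vandermonde_nz by simp
qed

lemma H_char:
  assumes "p \<in> laurent_ring m" "p * vandermonde m = Fal m (k + int (m - 1))"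
  shows "H m k = p"
proof -
  have "(\<lambda>i. (if i = 0 then k else 0) + int (m - 1 - i)) = ex m (k + int (m - 1))"
    by (auto simp: ex_def)
  then show ?thesis unfolding H_def using assms by (intro E_char) (simp_all add: Fal_def)
qed




lemma keys_ind: "finite S \<Longrightarrow> Poly_Mapping.keys (ind S) = S"
  by (auto simp: in_keys_iff lookup_ind split: if_splits)

lemma mon_laurent: "Poly_Mapping.keys \<alpha> \<subseteq> {..<m} \<Longrightarrow> mon \<alpha> \<in> laurent_ring m"
  by (simp add: laurent_ring_def)

lemma laurent_zero: "0 \<in> laurent_ring m" by (simp add: laurent_ring_def)

lemma laurent_sum: "(\<And>x. x \<in> A \<Longrightarrow> f x \<in> laurent_ring m) \<Longrightarrow> sum f A \<in> laurent_ring m"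
  by (induction A rule: infinite_finite_induct) (auto simp: laurent_zero laurent_add)

lemma perm_mon_ind:
  assumes "bij \<sigma>" "finite S" shows "perm_mon \<sigma> (ind S) = ind (\<sigma> ` S)"
proof (rule poly_mapping_eqI)
  fix j
  have "Hilbert_Choice.inv \<sigma> j \<in> S \<longleftrightarrow> j \<in> \<sigma> ` S"
    using assms(1) by (metis bij_inv_eq_iff image_iff)
  then show "Poly_Mapping.lookup (perm_mon \<sigma> (ind S)) j = Poly_Mapping.lookup (ind (\<sigma> ` S)) j"
    using assms by (simp add: lookup_perm_mon lookup_ind)
qed

lemma perm_mon_uminus:
  assumes "bij \<sigma>" shows "perm_mon \<sigma> (- x) = - perm_mon \<sigma> x"
  by (rule poly_mapping_eqI) (simp add: lookup_perm_mon[OF assms])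

lemma symp_mon:
  assumes "\<And>\<sigma>. \<sigma> permutes {..<m} \<Longrightarrow> perm_mon \<sigma> \<alpha> = \<alpha>"
  shows "symp m (mon \<alpha>)"
  unfolding symp_def
proof (intro allI impI)
  fix \<sigma> \<beta> assume s: "\<sigma> permutes {..<m}"
  then have b: "bij \<sigma>" by (rule permutes_bij)
  have "\<alpha> = perm_mon \<sigma> \<beta> \<longleftrightarrow> perm_mon \<sigma> \<alpha> = perm_mon \<sigma> \<beta>" using assms[OF s] by simp
  also have "\<dots> \<longleftrightarrow> \<alpha> = \<beta>" using inj_perm_mon[OF b] by (auto dest: injD)
  finally show "Poly_Mapping.lookup (mon \<alpha>) (perm_mon \<sigma> \<beta>) = Poly_Mapping.lookup (mon \<alpha>) \<beta>"
    by (simp add: lookup_mon)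
qed

lemma perm_ind_all: "\<sigma> permutes {..<m} \<Longrightarrow> perm_mon \<sigma> (ind {..<m}) = ind {..<m}"
  by (simp add: perm_mon_ind permutes_bij permutes_image)

lemma DD_sym: "DD m \<in> sym_laurent m"
  unfolding sym_laurent_iff DD_def
  by (auto intro!: mon_laurent symp_mon simp: keys_ind perm_ind_all)

lemma DI_sym: "DI m \<in> sym_laurent m"
  unfolding sym_laurent_iff DI_def
  by (auto intro!: mon_laurent symp_mon simp: keys_ind perm_ind_all perm_mon_uminus permutes_bij)

lemma bij_image_subsets:
  assumes "\<tau> permutes A"
  shows "bij_betw (image \<tau>) {S. S \<subseteq> A \<and> card S = c} {S. S \<subseteq> A \<and> card S = c}"
proof (rule bij_betw_byWitness[where f'="image (Hilbert_Choice.inv \<tau>)"])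
  have b: "bij \<tau>" using assms by (rule permutes_bij)
  have ib: "Hilbert_Choice.inv \<tau> permutes A" using assms by (rule permutes_inv)
  show "\<forall>S\<in>{S. S \<subseteq> A \<and> card S = c}. Hilbert_Choice.inv \<tau> ` \<tau> ` S = S"
    using b by (simp add: image_comp bij_is_inj)
  show "\<forall>S\<in>{S. S \<subseteq> A \<and> card S = c}. \<tau> ` Hilbert_Choice.inv \<tau> ` S = S"
    using b by (simp add: image_comp surj_f_inv_f[OF bij_is_surj[OF b]])
  have gen: "image \<rho> ` {S. S \<subseteq> A \<and> card S = c} \<subseteq> {S. S \<subseteq> A \<and> card S = c}" if r: "\<rho> permutes A" for \<rho>
  proof
    fix T assume "T \<in> image \<rho> ` {S. S \<subseteq> A \<and> card S = c}"
    then obtain S where S: "S \<subseteq> A" "card S = c" "T = \<rho> ` S" by auto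
    have "inj_on \<rho> S" using bij_is_inj[OF permutes_bij[OF r]] by (rule inj_on_subset) simp
    then have "card T = c" using S by (simp add: card_image)
    moreover have "T \<subseteq> A" using S permutes_image[OF r] by blast
    ultimately show "T \<in> {S. S \<subseteq> A \<and> card S = c}" by simp
  qed
  show "image \<tau> ` {S. S \<subseteq> A \<and> card S = c} \<subseteq> {S. S \<subseteq> A \<and> card S = c}" by (rule gen[OF assms])
  show "image (Hilbert_Choice.inv \<tau>) ` {S. S \<subseteq> A \<and> card S = c} \<subseteq> {S. S \<subseteq> A \<and> card S = c}" by (rule gen[OF ib])
qed

lemma lookup_esym: "Poly_Mapping.lookup (esym m c) \<beta> = (\<Sum>S\<in>{S. S \<subseteq> {..<m} \<and> card S = c}. if ind S = \<beta> then 1 else 0)"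
  by (simp add: esym_def esymA_def lookup_sum lookup_mon)

lemma esym_symp: "symp m (esym m c)"
  unfolding symp_def
proof (intro allI impI)
  fix \<sigma> \<beta> assume s: "\<sigma> permutes {..<m}"
  have b: "bij \<sigma>" using s by (rule permutes_bij)
  let ?Sets = "{S. S \<subseteq> {..<m} \<and> card S = c}"
  have "(\<Sum>S\<in>?Sets. if ind S = perm_mon \<sigma> \<beta> then 1 else (0::int)) = (\<Sum>S\<in>?Sets. if ind (Hilbert_Choice.inv \<sigma> ` S) = \<beta> then 1 else 0)"
  proof (rule sum.cong[OF refl])
    fix S assume S: "S \<in> ?Sets"
    then have f: "finite S" using finite_subset by blast
    have "ind S = perm_mon \<sigma> \<beta> \<longleftrightarrow> perm_mon (Hilbert_Choice.inv \<sigma>) (ind S) = \<beta>"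
      using perm_mon_inv[OF b] perm_mon_inv2[OF b] by metis
    also have "\<dots> \<longleftrightarrow> ind (Hilbert_Choice.inv \<sigma> ` S) = \<beta>"
      using f b by (simp add: perm_mon_ind bij_imp_bij_inv)
    finally show "(if ind S = perm_mon \<sigma> \<beta> then 1 else (0::int)) = (if ind (Hilbert_Choice.inv \<sigma> ` S) = \<beta> then 1 else 0)"
      by simp
  qed
  also have "\<dots> = (\<Sum>S\<in>?Sets. if ind S = \<beta> then 1 else 0)"
    by (rule sum.reindex_bij_betw[OF bij_image_subsets[OF permutes_inv[OF s]], of "\<lambda>S. if ind S = \<beta> then 1 else 0"])
  finally show "Poly_Mapping.lookup (esym m c) (perm_mon \<sigma> \<beta>) = Poly_Mapping.lookup (esym m c) \<beta>"
    by (simp add: lookup_esym)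
qed

lemma esym_laurent: "esym m c \<in> laurent_ring m"
  unfolding esym_def esymA_def
  by (rule laurent_sum) (auto intro!: mon_laurent simp: keys_ind finite_subset)

lemma esym_sym: "esym m c \<in> sym_laurent m"
  by (simp add: sym_laurent_iff esym_laurent esym_symp)

lemma sl_add: "p \<in> sym_laurent m \<Longrightarrow> q \<in> sym_laurent m \<Longrightarrow> p + q \<in> sym_laurent m"
  by (simp add: sym_laurent_iff laurent_add symp_add)
lemma sl_mult: "p \<in> sym_laurent m \<Longrightarrow> q \<in> sym_laurent m \<Longrightarrow> p * q \<in> sym_laurent m"
  by (simp add: sym_laurent_iff laurent_mult symp_mult)
lemma sl_neg: "p \<in> sym_laurent m \<Longrightarrow> - p \<in> sym_laurent m"
  by (simp add: sym_laurent_iff laurent_neg symp_neg)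
lemma sl_one: "1 \<in> sym_laurent m"
  by (simp add: sym_laurent_iff laurent_one symp_one)
lemma sl_zero: "0 \<in> sym_laurent m"
  using sl_add[OF sl_one sl_neg[OF sl_one]] by simp
lemma sl_sum: "(\<And>x. x \<in> A \<Longrightarrow> f x \<in> sym_laurent m) \<Longrightarrow> sum f A \<in> sym_laurent m"
  by (induction A rule: infinite_finite_induct) (auto simp: sl_zero sl_add)
lemma sl_pow: "p \<in> sym_laurent m \<Longrightarrow> p ^ n \<in> sym_laurent m"
  by (induction n) (simp_all add: sl_one sl_mult)
lemma sl_m1: "(-1::lpoly) ^ n \<in> sym_laurent m"
  by (rule sl_pow, rule sl_neg, rule sl_one)




lemma combine:
  assumes "x + (\<Sum>c\<in>A. g c * Fal m (b c)) = 0" "\<And>c. c \<in> A \<Longrightarrow> Fal m (b c) = Q c * vandermonde m"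
  shows "x = (- (\<Sum>c\<in>A. g c * Q c)) * vandermonde m"
proof -
  have "(\<Sum>c\<in>A. g c * Fal m (b c)) = (\<Sum>c\<in>A. g c * Q c) * vandermonde m"
    by (simp add: sum_distrib_right assms(2) mult.assoc)
  then show ?thesis using assms(1) by (simp add: add_eq_0_iff)
qed

lemma Fq_nonneg:
  assumes m: "m > 0" and a: "0 \<le> a"
  shows "\<exists>q\<in>sym_laurent m. Fal m a = q * vandermonde m"
  using a
proof (induction "nat a" arbitrary: a rule: less_induct)
  case less
  consider "a \<le> int m - 2" | "a = int m - 1" | "a \<ge> int m" by linarith
  then show ?case
  proof cases
    case 1
    then show ?thesis using Fal_zero[OF less.prems 1] sl_zero by force
  next
    case 2
    then have "a = int (m - 1)" using m by simp
    then show ?thesis using Fal_top sl_one by force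
  next
    case 3
    have "\<forall>c\<in>{..<m}. \<exists>q. q \<in> sym_laurent m \<and> Fal m (a - int (Suc c)) = q * vandermonde m"
    proof
      fix c assume "c \<in> {..<m}"
      then have "0 \<le> a - int (Suc c)" "nat (a - int (Suc c)) < nat a" using 3 by auto
      then show "\<exists>q. q \<in> sym_laurent m \<and> Fal m (a - int (Suc c)) = q * vandermonde m"
        using less.hyps by blast
    qed
    then obtain Q where Q: "\<And>c. c \<in> {..<m} \<Longrightarrow> Q c \<in> sym_laurent m \<and> Fal m (a - int (Suc c)) = Q c * vandermonde m"
      by metis
    obtain m' where m': "m = Suc m'" using m by (cases m) auto
    have "(\<Sum>c\<le>m. (-1)^c * esym m c * Fal m (a - int c)) = 0" by (rule rec_Fal[OF m])
    then have "Fal m a + (\<Sum>c\<in>{..<m}. ((-1)^(Suc c) * esym m (Suc c)) * Fal m (a - int (Suc c))) = 0"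
      unfolding m' sum.atMost_Suc_shift by (simp add: esym_0 lessThan_Suc_atMost)
    then have "Fal m a = (- (\<Sum>c\<in>{..<m}. ((-1)^(Suc c) * esym m (Suc c)) * Q c)) * vandermonde m"
      by (rule combine) (use Q in blast)
    moreover have "(- (\<Sum>c\<in>{..<m}. ((-1)^(Suc c) * esym m (Suc c)) * Q c)) \<in> sym_laurent m"
      by (intro sl_neg sl_sum sl_mult sl_m1 esym_sym) (use Q in blast)
    ultimately show ?thesis by blast
  qed
qed

lemma Fq:
  assumes m: "m > 0"
  shows "\<exists>q\<in>sym_laurent m. Fal m a = q * vandermonde m"
proof (cases "0 \<le> a")
  case True then show ?thesis using Fq_nonneg[OF m] by blast
next
  case False
  then show ?thesis
  proof (induction "nat (- a)" arbitrary: a rule: less_induct)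
    case less
    have "\<forall>c\<in>{..<m}. \<exists>q. q \<in> sym_laurent m \<and> Fal m (a + int m - int c) = q * vandermonde m"
    proof
      fix c assume c: "c \<in> {..<m}"
      show "\<exists>q. q \<in> sym_laurent m \<and> Fal m (a + int m - int c) = q * vandermonde m"
      proof (cases "0 \<le> a + int m - int c")
        case True then show ?thesis using Fq_nonneg[OF m True] by blast
      next
        case False
        then have "nat (- (a + int m - int c)) < nat (- a)" using c less.prems by auto
        then show ?thesis using less.hyps False by blast
      qed
    qed
    then obtain Q where Q: "\<And>c. c \<in> {..<m} \<Longrightarrow> Q c \<in> sym_laurent m \<and> Fal m (a + int m - int c) = Q c * vandermonde m"
      by metis
    obtain m' where m': "m = Suc m'" using m by (cases m) auto
    have "(\<Sum>c\<le>m. (-1)^c * esym m c * Fal m ((a + int m) - int c)) = 0" by (rule rec_Fal[OF m])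
    then have "(-1)^m * DD m * Fal m a + (\<Sum>c\<in>{..<m}. ((-1)^c * esym m c) * Fal m (a + int m - int c)) = 0"
      unfolding m' sum.atMost_Suc by (simp add: esym_top[of "Suc m'", symmetric] lessThan_Suc_atMost add.commute)
    then have e: "(-1)^m * DD m * Fal m a = (- (\<Sum>c\<in>{..<m}. ((-1)^c * esym m c) * Q c)) * vandermonde m"
      by (rule combine) (use Q in blast)
    have "Fal m a = ((-1)^m * DI m) * ((-1)^m * DD m * Fal m a)"
    proof -
      have "((-1::lpoly)^m * DI m) * ((-1)^m * DD m * Fal m a) = ((-1)^m * (-1)^m) * (DD m * DI m) * Fal m a"
        by (simp only: mult_ac)
      also have "\<dots> = Fal m a" by (simp add: DD_DI power_mult_distrib[symmetric])
      finally show ?thesis by simp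
    qed
    also have "\<dots> = (((-1)^m * DI m) * (- (\<Sum>c\<in>{..<m}. ((-1)^c * esym m c) * Q c))) * vandermonde m"
      unfolding e by (simp only: mult.assoc)
    finally have "Fal m a = (((-1)^m * DI m) * (- (\<Sum>c\<in>{..<m}. ((-1)^c * esym m c) * Q c))) * vandermonde m" .
    moreover have "((-1)^m * DI m) * (- (\<Sum>c\<in>{..<m}. ((-1)^c * esym m c) * Q c)) \<in> sym_laurent m"
      by (intro sl_neg sl_sum sl_mult sl_m1 esym_sym DI_sym) (use Q in blast)
    ultimately show ?case by blast
  qed
qed

lemma H_eq:
  assumes m: "m > 0"
  shows "H m k \<in> sym_laurent m \<and> H m k * vandermonde m = Fal m (k + int (m - 1))"
proof -
  obtain q where q: "q \<in> sym_laurent m" "Fal m (k + int (m - 1)) = q * vandermonde m"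
    using Fq[OF m] by blast
  have "H m k = q" using q by (intro H_char) (auto simp: sym_laurent_iff)
  then show ?thesis using q by simp
qed

lemma incl1: "m > 0 \<Longrightarrow> subring_gen (range (H m)) \<subseteq> sym_laurent m"
  by (rule sym_subring) (use H_eq in blast)

lemma H_0: "m > 0 \<Longrightarrow> H m 0 = 1"
  by (rule H_char) (use Fal_top[of m] in \<open>simp_all add: laurent_one\<close>)

lemma H_zero: "m > 0 \<Longrightarrow> - int (m - 1) \<le> k \<Longrightarrow> k \<le> -1 \<Longrightarrow> H m k = 0"
  by (rule H_char) (simp_all add: laurent_zero Fal_zero)

lemma H_rec:
  assumes m: "m > 0"
  shows "(\<Sum>c\<le>m. (-1)^c * esym m c * H m (n - int c)) = 0"
proof -
  have "(\<Sum>c\<le>m. (-1)^c * esym m c * H m (n - int c)) * vandermonde m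
      = (\<Sum>c\<le>m. (-1)^c * esym m c * Fal m ((n + int (m - 1)) - int c))"
  proof -
    have "(\<Sum>c\<le>m. (-1)^c * esym m c * H m (n - int c)) * vandermonde m = (\<Sum>c\<le>m. (-1)^c * esym m c * (H m (n - int c) * vandermonde m))"
      by (simp add: sum_distrib_right mult.assoc)
    also have "\<dots> = (\<Sum>c\<le>m. (-1)^c * esym m c * Fal m ((n + int (m - 1)) - int c))"
    proof (rule sum.cong[OF refl])
      fix c
      have "n - int c + int (m - 1) = (n + int (m - 1)) - int c" by simp
      then show "(-1)^c * esym m c * (H m (n - int c) * vandermonde m) = (-1)^c * esym m c * Fal m ((n + int (m - 1)) - int c)"
        using H_eq[OF m, of "n - int c"] by (simp add: algebra_simps)
    qed
    finally show ?thesis .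
  qed
  also have "\<dots> = 0" by (rule rec_Fal[OF m])
  finally show ?thesis using vandermonde_nz by simp
qed




abbreviation R :: "nat \<Rightarrow> lpoly set" where "R m \<equiv> subring_gen (range (H m))"

lemma r_zero: "0 \<in> subring_gen S"
  using subring_gen.add[OF subring_gen.one subring_gen.neg[OF subring_gen.one]] by simp
lemma r_sum: "(\<And>x. x \<in> A \<Longrightarrow> f x \<in> subring_gen S) \<Longrightarrow> sum f A \<in> subring_gen S"
  by (induction A rule: infinite_finite_induct) (auto simp: r_zero intro: subring_gen.add)
lemma r_pow: "p \<in> subring_gen S \<Longrightarrow> p ^ n \<in> subring_gen S"
  by (induction n) (auto intro: subring_gen.one subring_gen.mult)
lemma r_m1: "(-1) ^ n \<in> subring_gen S"
  by (intro r_pow subring_gen.neg subring_gen.one)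
lemma r_H: "H m k \<in> R m" by (rule subring_gen.gen) simp

lemma DI_R:
  assumes m: "m > 0" shows "DI m \<in> R m"
proof -
  let ?f = "\<lambda>c. (-1)^c * esym m c * H m (0 - int c)"
  have "(\<Sum>c\<le>m. ?f c) = 0" by (rule H_rec[OF m])
  moreover have "(\<Sum>c\<le>m. ?f c) = (\<Sum>c\<in>{0, m}. ?f c)"
  proof (rule sum.mono_neutral_right)
    show "\<forall>c\<in>{..m} - {0, m}. ?f c = 0"
    proof
      fix c assume "c \<in> {..m} - {0, m}"
      then have "- int (m - 1) \<le> 0 - int c" "0 - int c \<le> -1" by auto
      then show "?f c = 0" using H_zero[OF m] by simp
    qed
  qed auto
  moreover have "(\<Sum>c\<in>{0, m}. ?f c) = 1 + (-1)^m * DD m * H m (- int m)"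
    using m by (simp add: esym_0 H_0 esym_top)
  ultimately have e: "1 + (-1)^m * DD m * H m (- int m) = 0" by simp
  have X: "(-1)^m * DD m * H m (- int m) = -1" using e by (simp add: add_eq_0_iff)
  have "DI m = - (DI m * ((-1)^m * DD m * H m (- int m)))"
    by (simp add: X)
  also have "\<dots> = - ((-1)^m * H m (- int m)) * (DD m * DI m)"
    by (simp add: algebra_simps)
  also have "\<dots> = - ((-1)^m * H m (- int m))" by (simp add: DD_DI)
  finally have "DI m = - ((-1)^m * H m (- int m))" .
  moreover have "- ((-1)^m * H m (- int m)) \<in> R m"
    by (intro subring_gen.neg subring_gen.mult r_m1 r_H)
  ultimately show ?thesis by simp
qed

lemma esym_R:
  assumes m: "m > 0" shows "n \<le> m \<Longrightarrow> esym m n \<in> R m"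
proof (induction n rule: less_induct)
  case (less n)
  show ?case
  proof (cases "n = 0")
    case True then show ?thesis by (simp add: esym_0 subring_gen.one)
  next
    case False
    let ?f = "\<lambda>c. (-1)^c * esym m c * H m (int n - int c)"
    have "(\<Sum>c\<le>m. ?f c) = 0" by (rule H_rec[OF m])
    moreover have "(\<Sum>c\<le>m. ?f c) = (\<Sum>c\<le>n. ?f c)"
    proof (rule sum.mono_neutral_right)
      show "\<forall>c\<in>{..m} - {..n}. ?f c = 0"
      proof
        fix c assume "c \<in> {..m} - {..n}"
        then have "- int (m - 1) \<le> int n - int c" "int n - int c \<le> -1" using False by auto
        then show "?f c = 0" using H_zero[OF m] by simp
      qed
    qed (use less.prems in auto)
    moreover have "(\<Sum>c\<le>n. ?f c) = (\<Sum>c<n. ?f c) + (-1)^n * esym m n"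
      by (simp add: lessThan_Suc_atMost[symmetric] H_0[OF m])
    ultimately have e: "(\<Sum>c<n. ?f c) + (-1)^n * esym m n = 0" by simp
    have "esym m n = ((-1)^n * (-1)^n) * esym m n" by (simp add: power_mult_distrib[symmetric])
    also have "\<dots> = (-1)^n * ((\<Sum>c<n. ?f c) + (-1)^n * esym m n) - (-1)^n * (\<Sum>c<n. ?f c)"
      by (simp add: algebra_simps)
    also have "\<dots> = - ((-1)^n * (\<Sum>c<n. ?f c))" by (simp add: e)
    finally have "esym m n = - ((-1)^n * (\<Sum>c<n. ?f c))" .
    moreover have "- ((-1)^n * (\<Sum>c<n. ?f c)) \<in> R m"
      using less by (intro subring_gen.neg subring_gen.mult r_m1 r_sum r_H) auto
    ultimately show ?thesis by simp
  qed
qed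




lemma lookup_mult_alt: "Poly_Mapping.lookup ((p::lpoly) * q) \<gamma> = Sum_any (\<lambda>l. Poly_Mapping.lookup p l * Poly_Mapping.lookup q (\<gamma> - l))"
proof -
  have "Sum_any (\<lambda>r. Poly_Mapping.lookup q r when \<gamma> = l + r) = Poly_Mapping.lookup q (\<gamma> - l)" for l
  proof -
    have "Sum_any (\<lambda>r. Poly_Mapping.lookup q r when \<gamma> = l + r) = Sum_any (\<lambda>r. Poly_Mapping.lookup q r when r = \<gamma> - l)"
    proof -
      have "\<gamma> = l + r \<longleftrightarrow> r = \<gamma> - l" for r by (auto simp: eq_diff_eq add.commute)
      then show ?thesis by simp
    qed
    then show ?thesis by (simp add: Sum_any_when_equal)
  qed
  then show ?thesis by (simp add: lookup_mult)
qed

lemma lookup_of_int_mult: "Poly_Mapping.lookup (of_int c * (p::lpoly)) \<beta> = c * Poly_Mapping.lookup p \<beta>"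
proof -
  have "Poly_Mapping.lookup (of_int c * p) \<beta> = Sum_any (\<lambda>l. (Poly_Mapping.lookup p (\<beta> - l) * c) when l = 0)"
    unfolding lookup_mult_alt by (rule Sum_any.cong) (simp add: lookup_of_int when_def)
  then show ?thesis by (simp add: Sum_any_when_equal)
qed

definition lead1 :: "lpoly \<Rightarrow> (nat \<Rightarrow>\<^sub>0 int) \<Rightarrow> bool" where
  "lead1 p \<alpha> \<longleftrightarrow> Poly_Mapping.lookup p \<alpha> = 1 \<and> (\<forall>\<beta>\<in>Poly_Mapping.keys p. \<beta> \<le> \<alpha>)"

lemma keys_mult_elem:
  assumes "\<gamma> \<in> Poly_Mapping.keys (p * q)"
  obtains a b where "\<gamma> = a + b" "a \<in> Poly_Mapping.keys p" "b \<in> Poly_Mapping.keys q"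
proof -
  have "\<gamma> \<in> {a + b |a b. a \<in> Poly_Mapping.keys p \<and> b \<in> Poly_Mapping.keys q}"
    using keys_mult assms by (rule subsetD)
  then show ?thesis using that by blast
qed

lemma lead1_mult:
  assumes p: "lead1 p \<alpha>" and q: "lead1 q \<beta>"
  shows "lead1 (p * q) (\<alpha> + \<beta>)"
  unfolding lead1_def
proof
  show "\<forall>\<gamma>\<in>Poly_Mapping.keys (p * q). \<gamma> \<le> \<alpha> + \<beta>"
  proof
    fix \<gamma> assume "\<gamma> \<in> Poly_Mapping.keys (p * q)"
    then obtain a b where "\<gamma> = a + b" "a \<in> Poly_Mapping.keys p" "b \<in> Poly_Mapping.keys q"
      by (rule keys_mult_elem)
    then show "\<gamma> \<le> \<alpha> + \<beta>" using p q unfolding lead1_def by (auto intro: add_mono)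
  qed
  have "Poly_Mapping.lookup (p * q) (\<alpha> + \<beta>) = Sum_any (\<lambda>l. (Poly_Mapping.lookup p l * Poly_Mapping.lookup q (\<alpha> + \<beta> - l)) when l = \<alpha>)"
    unfolding lookup_mult_alt
  proof (rule Sum_any.cong)
    fix l
    show "Poly_Mapping.lookup p l * Poly_Mapping.lookup q (\<alpha> + \<beta> - l) = (Poly_Mapping.lookup p l * Poly_Mapping.lookup q (\<alpha> + \<beta> - l) when l = \<alpha>)"
    proof (cases "l = \<alpha>")
      case True then show ?thesis by simp
    next
      case False
      show ?thesis
      proof (cases "Poly_Mapping.lookup p l = 0 \<or> Poly_Mapping.lookup q (\<alpha> + \<beta> - l) = 0")
        case True then show ?thesis by (auto simp: when_def)
      next
        case nz: False
        then have "l \<le> \<alpha>" "\<alpha> + \<beta> - l \<le> \<beta>" using p q unfolding lead1_def by (auto simp: in_keys_iff)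
        then have "l < \<alpha>" using False by simp
        then have "l + (\<alpha> + \<beta> - l) < \<alpha> + \<beta>" using \<open>\<alpha> + \<beta> - l \<le> \<beta>\<close> by (metis add_less_le_mono)
        then show ?thesis by simp
      qed
    qed
  qed
  also have "\<dots> = 1" using p q by (simp add: Sum_any_when_equal lead1_def)
  finally show "Poly_Mapping.lookup (p * q) (\<alpha> + \<beta>) = 1" .
qed

lemma lead1_one: "lead1 1 0"
  by (simp add: lead1_def)

lemma lead1_pow: "lead1 p \<alpha> \<Longrightarrow> lead1 (p ^ k) (\<Sum>t<k. \<alpha>)"
proof (induction k)
  case 0 then show ?case by (simp add: lead1_one)
next
  case (Suc k)
  have "lead1 (p * p ^ k) (\<alpha> + (\<Sum>t<k. \<alpha>))" using Suc by (intro lead1_mult) auto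
  then show ?case by (simp del: sum_constant add: add.commute)
qed

lemma lead1_prod: "(\<And>i. i \<in> I \<Longrightarrow> lead1 (f i) (a i)) \<Longrightarrow> lead1 (\<Prod>i\<in>I. f i) (\<Sum>i\<in>I. a i)"
  by (induction I rule: infinite_finite_induct) (simp_all add: lead1_one lead1_mult)




lemma ind_inj: "finite S \<Longrightarrow> finite T \<Longrightarrow> ind S = ind T \<longleftrightarrow> S = T"
  by (metis keys_ind)

lemma ind_le:
  assumes f: "finite S" and c: "card S = c"
  shows "ind S \<le> ind {..<c}"
proof (cases "{..<c} \<subseteq> S")
  case True
  then have "{..<c} = S" using card_subset_eq[OF f True] c by simp
  then show ?thesis by simp
next
  case False
  then have ex: "\<exists>k. k < c \<and> k \<notin> S" by auto
  define k where "k = (LEAST k. k < c \<and> k \<notin> S)"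
  have k: "k < c" "k \<notin> S" using LeastI_ex[OF ex] by (auto simp: k_def)
  have below: "k' \<in> S" if "k' < k" for k'
    using not_less_Least[of k' "\<lambda>k. k < c \<and> k \<notin> S"] that k by (auto simp: k_def)
  have "less_fun (Poly_Mapping.lookup (ind S)) (Poly_Mapping.lookup (ind {..<c}))"
    unfolding less_fun_def
    by (rule exI[of _ k]) (use k below f in \<open>auto simp: lookup_ind\<close>)
  then show ?thesis by (simp add: less_eq_poly_mapping.rep_eq)
qed

lemma esym_keys: "\<beta> \<in> Poly_Mapping.keys (esym m c) \<Longrightarrow> \<exists>S. S \<subseteq> {..<m} \<and> card S = c \<and> \<beta> = ind S"
proof (rule ccontr)
  assume "\<beta> \<in> Poly_Mapping.keys (esym m c)" "\<nexists>S. S \<subseteq> {..<m} \<and> card S = c \<and> \<beta> = ind S"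
  then have "Poly_Mapping.lookup (esym m c) \<beta> = 0" unfolding lookup_esym by (intro sum.neutral) auto
  then show False using \<open>\<beta> \<in> _\<close> by (simp add: in_keys_iff)
qed

lemma esym_lead: assumes "c \<le> m" shows "lead1 (esym m c) (ind {..<c})"
  unfolding lead1_def
proof
  let ?Sets = "{S. S \<subseteq> {..<m} \<and> card S = c}"
  have "Poly_Mapping.lookup (esym m c) (ind {..<c}) = (\<Sum>S\<in>?Sets. if S = {..<c} then 1 else 0)"
    unfolding lookup_esym by (rule sum.cong[OF refl]) (auto simp: ind_inj finite_subset)
  also have "\<dots> = 1" using assms by (simp add: sum.delta)
  finally show "Poly_Mapping.lookup (esym m c) (ind {..<c}) = 1" .
  show "\<forall>\<beta>\<in>Poly_Mapping.keys (esym m c). \<beta> \<le> ind {..<c}"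
    using esym_keys ind_le finite_subset by (metis finite_lessThan)
qed

definition NN :: "nat \<Rightarrow> (nat \<Rightarrow>\<^sub>0 int) \<Rightarrow> bool" where
  "NN m \<beta> \<longleftrightarrow> Poly_Mapping.keys \<beta> \<subseteq> {..<m} \<and> (\<forall>i. 0 \<le> Poly_Mapping.lookup \<beta> i)"

definition deg :: "nat \<Rightarrow> (nat \<Rightarrow>\<^sub>0 int) \<Rightarrow> int" where
  "deg m \<beta> = (\<Sum>i<m. Poly_Mapping.lookup \<beta> i)"

definition homog :: "nat \<Rightarrow> int \<Rightarrow> lpoly \<Rightarrow> bool" where
  "homog m d p \<longleftrightarrow> (\<forall>\<beta>\<in>Poly_Mapping.keys p. NN m \<beta> \<and> deg m \<beta> = d)"

lemma homog_mult:
  assumes "homog m d p" "homog m e q" shows "homog m (d + e) (p * q)"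
  unfolding homog_def
proof
  fix \<gamma> assume "\<gamma> \<in> Poly_Mapping.keys (p * q)"
  then obtain a b where ab: "\<gamma> = a + b" "a \<in> Poly_Mapping.keys p" "b \<in> Poly_Mapping.keys q"
    by (rule keys_mult_elem)
  then have a: "NN m a" "deg m a = d" and b: "NN m b" "deg m b = e"
    using assms unfolding homog_def by auto
  have "Poly_Mapping.keys (a + b) \<subseteq> Poly_Mapping.keys a \<union> Poly_Mapping.keys b" by (rule keys_add)
  then have "NN m (a + b)" using a b unfolding NN_def by (auto simp: lookup_add)
  moreover have "deg m (a + b) = d + e" using a b by (simp add: deg_def lookup_add sum.distrib)
  ultimately show "NN m \<gamma> \<and> deg m \<gamma> = d + e" using ab by simp
qed

lemma homog_one: "homog m 0 1"
  by (simp add: homog_def NN_def deg_def)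

lemma homog_pow: "homog m d p \<Longrightarrow> \<exists>e. homog m e (p ^ k)"
proof (induction k)
  case 0 then show ?case using homog_one by auto
next
  case (Suc k) then show ?case using homog_mult by fastforce
qed

lemma homog_prod: "(\<And>i. i \<in> I \<Longrightarrow> \<exists>d. homog m d (f i)) \<Longrightarrow> \<exists>d. homog m d (\<Prod>i\<in>I. f i)"
proof (induction I rule: infinite_finite_induct)
  case (infinite A) then show ?case using homog_one by auto
next
  case empty then show ?case using homog_one by auto
next
  case (insert x F)
  then obtain d e where "homog m d (f x)" "homog m e (\<Prod>i\<in>F. f i)" by blast
  then show ?case using homog_mult insert by fastforce
qed

lemma deg_ind: "S \<subseteq> {..<m} \<Longrightarrow> deg m (ind S) = int (card S)"
proof -
  assume S: "S \<subseteq> {..<m}"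
  then have f: "finite S" using finite_subset by blast
  have "deg m (ind S) = (\<Sum>i\<in>{..<m}. if i \<in> S then 1 else 0)" by (simp add: deg_def lookup_ind f)
  also have "\<dots> = (\<Sum>i\<in>{i\<in>{..<m}. i \<in> S}. 1)" by (rule sum.inter_filter[symmetric]) simp
  also have "{i\<in>{..<m}. i \<in> S} = S" using S by auto
  finally show ?thesis by simp
qed

lemma esym_homog: "homog m (int c) (esym m c)"
  unfolding homog_def
proof
  fix \<beta> assume "\<beta> \<in> Poly_Mapping.keys (esym m c)"
  then obtain S where S: "S \<subseteq> {..<m}" "card S = c" "\<beta> = ind S" using esym_keys by blast
  then have f: "finite S" using finite_subset by blast
  show "NN m \<beta> \<and> deg m \<beta> = int c" using S f by (auto simp: NN_def keys_ind lookup_ind deg_ind)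
qed




definition Eprod :: "nat \<Rightarrow> (nat \<Rightarrow>\<^sub>0 int) \<Rightarrow> lpoly" where
  "Eprod m \<alpha> = (\<Prod>i<m. esym m (Suc i) ^ nat (Poly_Mapping.lookup \<alpha> i - Poly_Mapping.lookup \<alpha> (Suc i)))"

definition sortedp :: "nat \<Rightarrow> (nat \<Rightarrow>\<^sub>0 int) \<Rightarrow> bool" where
  "sortedp m \<alpha> \<longleftrightarrow> (\<forall>i. Suc i < m \<longrightarrow> Poly_Mapping.lookup \<alpha> (Suc i) \<le> Poly_Mapping.lookup \<alpha> i)"

lemma tele: "j \<le> n \<Longrightarrow> (\<Sum>i\<in>{j..<n}. f i - f (Suc i)) = f j - (f n :: int)"
proof (induction n)
  case 0 then show ?case by simp
next
  case (Suc n)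
  show ?case
  proof (cases "j = Suc n")
    case True then show ?thesis by simp
  next
    case False
    then have "j \<le> n" using Suc.prems by simp
    then show ?thesis using Suc.IH by (simp add: atLeastLessThanSuc)
  qed
qed

lemma Eprod_lead:
  assumes nn: "NN m \<alpha>" and so: "sortedp m \<alpha>"
  shows "lead1 (Eprod m \<alpha>) \<alpha>"
proof -
  define k where "k i = nat (Poly_Mapping.lookup \<alpha> i - Poly_Mapping.lookup \<alpha> (Suc i))" for i
  have kk: "int (k i) = Poly_Mapping.lookup \<alpha> i - Poly_Mapping.lookup \<alpha> (Suc i)" if "i < m" for i
  proof (cases "Suc i < m")
    case True then show ?thesis using so by (simp add: k_def sortedp_def)
  next
    case False
    then have "Suc i \<notin> Poly_Mapping.keys \<alpha>" using nn by (auto simp: NN_def)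
    then have "Poly_Mapping.lookup \<alpha> (Suc i) = 0" by (simp add: in_keys_iff)
    then show ?thesis using nn by (simp add: k_def NN_def)
  qed
  have L: "lead1 (Eprod m \<alpha>) (\<Sum>i<m. \<Sum>t<k i. ind {..<Suc i})"
    unfolding Eprod_def k_def[symmetric]
    by (intro lead1_prod lead1_pow esym_lead) auto
  have "(\<Sum>i<m. \<Sum>t<k i. ind {..<Suc i}) = \<alpha>"
  proof (rule poly_mapping_eqI)
    fix j
    have "Poly_Mapping.lookup (\<Sum>i<m. \<Sum>t<k i. ind {..<Suc i}) j = (\<Sum>i<m. int (k i) * (if j < Suc i then 1 else 0))"
      by (simp del: sum_constant add: lookup_sum lookup_ind) (simp add: sum_constant)
    also have "\<dots> = (\<Sum>i\<in>{..<m}. if j \<le> i then Poly_Mapping.lookup \<alpha> i - Poly_Mapping.lookup \<alpha> (Suc i) else 0)"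
      by (rule sum.cong[OF refl]) (auto simp: kk)
    also have "\<dots> = (\<Sum>i\<in>{i\<in>{..<m}. j \<le> i}. Poly_Mapping.lookup \<alpha> i - Poly_Mapping.lookup \<alpha> (Suc i))"
      by (rule sum.inter_filter[symmetric]) simp
    also have "\<dots> = Poly_Mapping.lookup \<alpha> j"
    proof (cases "j < m")
      case True
      then have "{i\<in>{..<m}. j \<le> i} = {j..<m}" by auto
      moreover have "Poly_Mapping.lookup \<alpha> m = 0" using nn by (auto simp: NN_def in_keys_iff)
      ultimately show ?thesis using True by (simp add: tele)
    next
      case False
      then have "{i\<in>{..<m}. j \<le> i} = {}" by auto
      moreover have "Poly_Mapping.lookup \<alpha> j = 0" using nn False by (auto simp: NN_def in_keys_iff)
      ultimately show ?thesis by (simp only: sum.empty)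
    qed
    finally show "Poly_Mapping.lookup (\<Sum>i<m. \<Sum>t<k i. ind {..<Suc i}) j = Poly_Mapping.lookup \<alpha> j" .
  qed
  then show ?thesis using L by simp
qed

lemma Eprod_homog: "\<exists>d. homog m d (Eprod m \<alpha>)"
  unfolding Eprod_def by (intro homog_prod) (use homog_pow esym_homog in blast)

lemma Eprod_symp: "symp m (Eprod m \<alpha>)"
proof -
  have "symp m (\<Prod>i\<in>I. esym m (Suc i) ^ nat (Poly_Mapping.lookup \<alpha> i - Poly_Mapping.lookup \<alpha> (Suc i)))" for I
    by (induction I rule: infinite_finite_induct) (simp_all add: symp_one symp_mult symp_power esym_symp)
  then show ?thesis by (simp add: Eprod_def)
qed

lemma r_prod: "(\<And>x. x \<in> A \<Longrightarrow> f x \<in> subring_gen S) \<Longrightarrow> prod f A \<in> subring_gen S"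
  by (induction A rule: infinite_finite_induct) (auto simp: subring_gen.one intro: subring_gen.mult)

lemma Eprod_R: "m > 0 \<Longrightarrow> Eprod m \<alpha> \<in> R m"
  unfolding Eprod_def by (intro r_prod r_pow esym_R) auto

lemma r_of_int: "of_int c \<in> subring_gen S"
proof -
  have n: "of_nat n \<in> subring_gen S" for n
    by (induction n) (auto simp: r_zero intro: subring_gen.add subring_gen.one)
  show ?thesis
  proof (cases "c \<ge> 0")
    case True then show ?thesis using n[of "nat c"] by simp
  next
    case False then show ?thesis using subring_gen.neg[OF n[of "nat (- c)"]] by simp
  qed
qed

lemma sorted_max:
  assumes sy: "symp m q" and q: "q \<noteq> 0"
  shows "sortedp m (Max (Poly_Mapping.keys q))"
  unfolding sortedp_def
proof (intro allI impI, rule ccontr)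
  fix i assume i: "Suc i < m"
  let ?\<alpha> = "Max (Poly_Mapping.keys q)"
  assume "\<not> Poly_Mapping.lookup ?\<alpha> (Suc i) \<le> Poly_Mapping.lookup ?\<alpha> i"
  then have lt: "Poly_Mapping.lookup ?\<alpha> i < Poly_Mapping.lookup ?\<alpha> (Suc i)" by simp
  define \<sigma> where "\<sigma> = Transposition.transpose i (Suc i)"
  have s: "\<sigma> permutes {..<m}" unfolding \<sigma>_def using i by (intro permutes_swap_id) auto
  have b: "bij \<sigma>" using s by (rule permutes_bij)
  have inv: "Hilbert_Choice.inv \<sigma> = \<sigma>" by (simp add: \<sigma>_def inv_transpose_eq)
  have ne: "Poly_Mapping.keys q \<noteq> {}" using q by simp
  have aK: "?\<alpha> \<in> Poly_Mapping.keys q" using Max_in[OF finite_keys ne] .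
  have "Poly_Mapping.lookup q (perm_mon \<sigma> ?\<alpha>) = Poly_Mapping.lookup q ?\<alpha>"
    using sy s by (simp add: symp_def)
  then have inK: "perm_mon \<sigma> ?\<alpha> \<in> Poly_Mapping.keys q" using aK by (simp add: in_keys_iff)
  have lk: "Poly_Mapping.lookup (perm_mon \<sigma> ?\<alpha>) j = Poly_Mapping.lookup ?\<alpha> (\<sigma> j)" for j
    using lookup_perm_mon[OF b] inv by simp
  have "?\<alpha> < perm_mon \<sigma> ?\<alpha>"
    unfolding less_poly_mapping.rep_eq less_fun_def lk
    by (rule exI[of _ i]) (use lt in \<open>auto simp: \<sigma>_def transpose_def\<close>)
  moreover have "perm_mon \<sigma> ?\<alpha> \<le> ?\<alpha>" using inK by (simp add: Max_ge)
  ultimately show False by simp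
qed




definition Box :: "nat \<Rightarrow> int \<Rightarrow> (nat \<Rightarrow>\<^sub>0 int) set" where
  "Box m T = {\<beta>. NN m \<beta> \<and> deg m \<beta> \<le> T}"

lemma finite_Box: "finite (Box m T)"
proof -
  let ?f = "\<lambda>\<beta>. map (Poly_Mapping.lookup \<beta>) [0..<m]"
  have le: "Poly_Mapping.lookup \<beta> i \<le> T" if "\<beta> \<in> Box m T" "i < m" for \<beta> i
  proof -
    have "Poly_Mapping.lookup \<beta> i \<le> deg m \<beta>" unfolding deg_def
      using that by (intro member_le_sum) (auto simp: Box_def NN_def)
    then show ?thesis using that by (simp add: Box_def)
  qed
  have "?f ` Box m T \<subseteq> {xs. set xs \<subseteq> {0..T} \<and> length xs = m}"
    using le by (auto simp: Box_def NN_def)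
  then have "finite (?f ` Box m T)" by (rule finite_subset) (rule finite_lists_length_eq, simp)
  moreover have "inj_on ?f (Box m T)"
  proof
    fix a b assume ab: "a \<in> Box m T" "b \<in> Box m T" "?f a = ?f b"
    show "a = b"
    proof (rule poly_mapping_eqI)
      fix i show "Poly_Mapping.lookup a i = Poly_Mapping.lookup b i"
      proof (cases "i < m")
        case True
        then have "?f a ! i = ?f b ! i" using ab by simp
        then show ?thesis using True by simp
      next
        case False
        then have "i \<notin> Poly_Mapping.keys a" "i \<notin> Poly_Mapping.keys b" using ab by (auto simp: Box_def NN_def)
        then show ?thesis by (simp add: in_keys_iff)
      qed
    qed
  qed
  ultimately show ?thesis by (rule finite_imageD)
qed

lemma keys_of_int_mult: "Poly_Mapping.keys (of_int c * (p::lpoly)) \<subseteq> Poly_Mapping.keys p"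
  by (auto simp: in_keys_iff lookup_of_int_mult)

lemma FT_main:
  assumes m: "m > 0"
  shows "symp m q \<Longrightarrow> Poly_Mapping.keys q \<subseteq> Box m T \<Longrightarrow> q \<in> R m"
proof (induction "card {\<beta>\<in>Box m T. \<beta> \<le> Max (Poly_Mapping.keys q)}" arbitrary: q rule: less_induct)
  case less
  show ?case
  proof (cases "q = 0")
    case True then show ?thesis by (simp add: r_zero)
  next
    case False
    define \<alpha> where "\<alpha> = Max (Poly_Mapping.keys q)"
    have ne: "Poly_Mapping.keys q \<noteq> {}" using False by simp
    have aK: "\<alpha> \<in> Poly_Mapping.keys q" unfolding \<alpha>_def using Max_in[OF finite_keys ne] .
    have aB: "\<alpha> \<in> Box m T" using aK less.prems by blast
    have nn: "NN m \<alpha>" using aB by (simp add: Box_def)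
    have so: "sortedp m \<alpha>" unfolding \<alpha>_def by (rule sorted_max[OF less.prems(1) False])
    define E where "E = Eprod m \<alpha>"
    have lE: "lead1 E \<alpha>" unfolding E_def by (rule Eprod_lead[OF nn so])
    obtain d where hE: "homog m d E" unfolding E_def using Eprod_homog by blast
    have "\<alpha> \<in> Poly_Mapping.keys E" using lE by (simp add: lead1_def in_keys_iff)
    then have "deg m \<alpha> = d" using hE by (simp add: homog_def)
    then have EB: "Poly_Mapping.keys E \<subseteq> Box m T" using hE aB by (auto simp: homog_def Box_def)
    define c where "c = Poly_Mapping.lookup q \<alpha>"
    define q' where "q' = q - of_int c * E"
    have sy': "symp m q'" unfolding q'_def E_def
      by (intro symp_diff symp_mult symp_of_int Eprod_symp less.prems(1))
    have K': "Poly_Mapping.keys q' \<subseteq> Poly_Mapping.keys q \<union> Poly_Mapping.keys E"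
    proof
      fix \<beta> assume "\<beta> \<in> Poly_Mapping.keys q'"
      then have "Poly_Mapping.lookup q \<beta> \<noteq> 0 \<or> Poly_Mapping.lookup E \<beta> \<noteq> 0"
        by (auto simp: q'_def in_keys_iff lookup_minus lookup_of_int_mult)
      then show "\<beta> \<in> Poly_Mapping.keys q \<union> Poly_Mapping.keys E" by (simp add: in_keys_iff)
    qed
    have B': "Poly_Mapping.keys q' \<subseteq> Box m T" using K' EB less.prems(2) by blast
    have lt: "\<beta> < \<alpha>" if "\<beta> \<in> Poly_Mapping.keys q'" for \<beta>
    proof -
      have "\<beta> \<le> \<alpha>" using K' that lE Max_ge[OF finite_keys, of _ q] by (auto simp: lead1_def \<alpha>_def)
      moreover have "Poly_Mapping.lookup q' \<alpha> = 0" using lE by (simp add: q'_def lookup_minus lookup_of_int_mult c_def lead1_def)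
      then have "\<beta> \<noteq> \<alpha>" using that by (auto simp: in_keys_iff)
      ultimately show ?thesis by simp
    qed
    have q'R: "q' \<in> R m"
    proof (cases "q' = 0")
      case True then show ?thesis by (simp add: r_zero)
    next
      case False
      have ne': "Poly_Mapping.keys q' \<noteq> {}" using False by simp
      have "Max (Poly_Mapping.keys q') < \<alpha>" using lt Max_in[OF finite_keys ne'] by blast
      then have s1: "{\<beta>\<in>Box m T. \<beta> \<le> Max (Poly_Mapping.keys q')} \<subseteq> {\<beta>\<in>Box m T. \<beta> \<le> \<alpha>}"
        by auto
      have "\<alpha> \<notin> {\<beta>\<in>Box m T. \<beta> \<le> Max (Poly_Mapping.keys q')}" using \<open>Max _ < \<alpha>\<close> by auto
      moreover have "\<alpha> \<in> {\<beta>\<in>Box m T. \<beta> \<le> \<alpha>}" using aB by simp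
      ultimately have sub: "{\<beta>\<in>Box m T. \<beta> \<le> Max (Poly_Mapping.keys q')} \<subset> {\<beta>\<in>Box m T. \<beta> \<le> \<alpha>}"
        using s1 by blast
      have "card {\<beta>\<in>Box m T. \<beta> \<le> Max (Poly_Mapping.keys q')} < card {\<beta>\<in>Box m T. \<beta> \<le> Max (Poly_Mapping.keys q)}"
        unfolding \<alpha>_def[symmetric] by (rule psubset_card_mono[OF _ sub]) (simp add: finite_Box)
      then show ?thesis using less.hyps sy' B' by blast
    qed
    have "q = q' + of_int c * E" by (simp add: q'_def)
    moreover have "of_int c * E \<in> R m" unfolding E_def by (intro subring_gen.mult r_of_int Eprod_R m)
    ultimately show ?thesis using q'R by (simp add: subring_gen.add)
  qed
qed




lemma DD_pow: "DD m ^ N = mon (\<Sum>t<N. ind {..<m})"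
proof (induction N)
  case 0 then show ?case by (simp add: mon_0)
next
  case (Suc N)
  have "DD m ^ Suc N = DD m * DD m ^ N" by simp
  also have "\<dots> = mon (ind {..<m} + (\<Sum>t<N. ind {..<m}))" by (subst Suc, simp only: DD_def mon_mult)
  also have "ind {..<m} + (\<Sum>t<N. ind {..<m}) = (\<Sum>t<Suc N. ind {..<m})" by (simp only: sum.lessThan_Suc add.commute)
  finally show ?case .
qed

lemma incl2:
  assumes m: "m > 0" and p: "p \<in> sym_laurent m"
  shows "p \<in> R m"
proof -
  have pl: "p \<in> laurent_ring m" and ps: "symp m p" using p by (auto simp: sym_laurent_iff)
  define N where "N = nat (\<Sum>\<beta>\<in>Poly_Mapping.keys p. \<Sum>i<m. \<bar>Poly_Mapping.lookup \<beta> i\<bar>)"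
  define \<gamma> where "\<gamma> = (\<Sum>t<N. ind {..<m})"
  have lg: "Poly_Mapping.lookup \<gamma> i = (if i < m then int N else 0)" for i
    by (simp del: sum_constant add: \<gamma>_def lookup_sum lookup_ind) (simp add: sum_constant)
  have bnd: "\<bar>Poly_Mapping.lookup \<beta> i\<bar> \<le> int N" if "\<beta> \<in> Poly_Mapping.keys p" "i < m" for \<beta> i
  proof -
    have "\<bar>Poly_Mapping.lookup \<beta> i\<bar> \<le> (\<Sum>i<m. \<bar>Poly_Mapping.lookup \<beta> i\<bar>)"
      using that by (intro member_le_sum) auto
    also have "\<dots> \<le> (\<Sum>\<beta>\<in>Poly_Mapping.keys p. \<Sum>i<m. \<bar>Poly_Mapping.lookup \<beta> i\<bar>)"
      using that by (intro member_le_sum) (auto intro: sum_nonneg)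
    moreover have "0 \<le> (\<Sum>\<beta>\<in>Poly_Mapping.keys p. \<Sum>i<m. \<bar>Poly_Mapping.lookup \<beta> i\<bar>)"
      by (intro sum_nonneg) auto
    ultimately show ?thesis by (simp add: N_def)
  qed
  have kb: "Poly_Mapping.keys \<beta> \<subseteq> {..<m}" if "\<beta> \<in> Poly_Mapping.keys p" for \<beta>
    using pl that by (auto simp: laurent_ring_def)
  have NNg: "NN m (\<gamma> + \<beta>)" if "\<beta> \<in> Poly_Mapping.keys p" for \<beta>
  proof -
    have k1: "Poly_Mapping.keys \<gamma> \<subseteq> {..<m}" by (auto simp: in_keys_iff lg split: if_splits)
    have "Poly_Mapping.keys (\<gamma> + \<beta>) \<subseteq> Poly_Mapping.keys \<gamma> \<union> Poly_Mapping.keys \<beta>" by (rule keys_add)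
    then have "Poly_Mapping.keys (\<gamma> + \<beta>) \<subseteq> {..<m}" using k1 kb[OF that] by blast
    moreover have "0 \<le> Poly_Mapping.lookup (\<gamma> + \<beta>) i" for i
    proof (cases "i < m")
      case True then show ?thesis using bnd[OF that True] by (simp add: lookup_add lg)
    next
      case False
      then have "i \<notin> Poly_Mapping.keys \<beta>" using kb[OF that] by auto
      then show ?thesis using False by (simp add: lookup_add lg in_keys_iff)
    qed
    ultimately show ?thesis by (simp add: NN_def)
  qed
  define T where "T = (\<Sum>\<beta>\<in>Poly_Mapping.keys p. deg m (\<gamma> + \<beta>))"
  have dnn: "0 \<le> deg m (\<gamma> + \<beta>)" if "\<beta> \<in> Poly_Mapping.keys p" for \<beta>
    using NNg[OF that] unfolding deg_def NN_def by (intro sum_nonneg) auto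
  define q where "q = DD m ^ N * p"
  have qs: "symp m q" unfolding q_def using DD_sym ps
    by (intro symp_mult symp_power) (auto simp: sym_laurent_iff)
  have qB: "Poly_Mapping.keys q \<subseteq> Box m T"
  proof
    fix x assume "x \<in> Poly_Mapping.keys q"
    then obtain a b where ab: "x = a + b" "a \<in> Poly_Mapping.keys (DD m ^ N)" "b \<in> Poly_Mapping.keys p"
      unfolding q_def by (rule keys_mult_elem)
    then have "a = \<gamma>" by (simp add: DD_pow \<gamma>_def)
    then have x: "x = \<gamma> + b" using ab by simp
    have "deg m (\<gamma> + b) \<le> T" unfolding T_def using ab(3) dnn by (intro member_le_sum) auto
    then show "x \<in> Box m T" using NNg[OF ab(3)] x by (simp add: Box_def)
  qed
  have qR: "q \<in> R m" by (rule FT_main[OF m qs qB])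
  have "p = DI m ^ N * q"
  proof -
    have "DI m ^ N * q = (DD m * DI m) ^ N * p" by (simp add: q_def power_mult_distrib mult_ac)
    then show ?thesis by (simp add: DD_DI)
  qed
  moreover have "DI m ^ N * q \<in> R m" by (intro subring_gen.mult r_pow DI_R m qR)
  ultimately show ?thesis by simp
qed

theorem mainTheorem4:
  fixes m :: nat
  assumes "m \<ge> 1"
  shows "subring_gen (range (H m)) = sym_laurent m"
proof
  have m: "m > 0" using assms by simp
  show "subring_gen (range (H m)) \<subseteq> sym_laurent m" by (rule incl1[OF m])
  show "sym_laurent m \<subseteq> subring_gen (range (H m))" using incl2[OF m] by blast
qed


end
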